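(* Let $M(\mu(u))$ be the Verma module over the Yangian $\mathrm{Y}(\mathfrak{sl}_2)$ with highest vector $1_\mu$, where $\mu(u)=P(u)/Q(u)$ (as a Laurent expansion at $u=\infty$) for monic polynomials $P(u),Q(u)$ in $u$ of degree $p$. Then for any integer $s\ge p$ there exist constants $c_0,\dots,c_{s-1}\in\mathbb{C}$ such that the vector $\zeta=c_0f^{(0)}1_\mu+\cdots+c_{s-1}f^{(s-1)}1_\mu+f^{(s)}1_\mu$ satisfies $e(u)\,\zeta=0$, i.e. $e^{(r)}\zeta=0$ for all $r\ge0$.
   Context: The Yangian $\mathrm{Y}(\mathfrak{sl}_2)$ is the associative algebra over $\mathbb{C}$ with generators $e^{(r)},h^{(r)},f^{(r)}$, $r\ge0$, and relations $[h^{(r)},h^{(s)}]=0$, $[e^{(r)},f^{(s)}]=h^{(r+s)}$, $[h^{(0)},e^{(s)}]=2e^{(s)}$, $[h^{(0)},f^{(s)}]=-2f^{(s)}$, $[h^{(r+1)},e^{(s)}]-[h^{(r)},e^{(s+1)}]=h^{(r)}e^{(s)}+e^{(s)}h^{(r)}$, $[h^{(r+1)},f^{(s)}]-[h^{(r)},f^{(s+1)}]=-(h^{(r)}f^{(s)}+f^{(s)}h^{(r)})$, $[e^{(r+1)},e^{(s)}]-[e^{(r)},e^{(s+1)}]=e^{(r)}e^{(s)}+e^{(s)}e^{(r)}$, $[f^{(r+1)},f^{(s)}]-[f^{(r)},f^{(s+1)}]=-(f^{(r)}f^{(s)}+f^{(s)}f^{(r)})$. Write $e(u)=\sum_{r\ge0}e^{(r)}u^{-r-1}$.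 For $\mu(u)=1+\mu^{(0)}u^{-1}+\mu^{(1)}u^{-2}+\cdots$, the Verma module $M(\mu(u))$ is the quotient of $\mathrm{Y}(\mathfrak{sl}_2)$ by the left ideal generated by $e^{(r)}$ and $h^{(r)}-\mu^{(r)}$, $r\ge0$; $1_\mu$ is the image of $1$. *)

theory Defs
  imports Complex_Main "HOL-Library.Poly_Mapping" "HOL-Computational_Algebra.Polynomial"
    "HOL-Computational_Algebra.Formal_Power_Series" "HOL-Computational_Algebra.Polynomial_FPS"
begin

datatype ygen = GE nat | GH nat | GF nat

datatype yword = YWord "ygen list"

instantiation yword :: monoid_add
begin
definition zero_yword :: yword where "zero_yword = YWord []"
fun plus_yword :: "yword \<Rightarrow> yword \<Rightarrow> yword" where
  "plus_yword (YWord a) (YWord b) = YWord (a @ b)"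
instance
proof
  fix a b c :: yword
  show "a + b + c = a + (b + c)" by (cases a; cases b; cases c) simp
  show "0 + a = a" by (cases a) (simp add: zero_yword_def)
  show "a + 0 = a" by (cases a) (simp add: zero_yword_def)
qed
end

text \<open>The free associative algebra over the complex numbers: finitely supported
  complex-valued functions on words, with convolution product.\<close>
type_synonym yfree = "yword \<Rightarrow>\<^sub>0 complex"

definition ysc :: "complex \<Rightarrow> yfree" where
  "ysc c = Poly_Mapping.single 0 c"

definition ye :: "nat \<Rightarrow> yfree" where "ye r = Poly_Mapping.single (YWord [GE r]) 1"
definition yh :: "nat \<Rightarrow> yfree" where "yh r = Poly_Mapping.single (YWord [GH r]) 1"
definition yf :: "nat \<Rightarrow> yfree" where "yf r = Poly_Mapping.single (YWord [GF r]) 1"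

definition comm :: "yfree \<Rightarrow> yfree \<Rightarrow> yfree" where
  "comm x y = x * y - y * x"

text \<open>Defining relations of Y(sl_2), each written as (lhs - rhs).\<close>
definition yang_rels :: "yfree set" where
  "yang_rels =
     {comm (yh r) (yh s) | r s. True}
   \<union> {comm (ye r) (yf s) - yh (r + s) | r s. True}
   \<union> {comm (yh 0) (ye s) - ysc 2 * ye s | s. True}
   \<union> {comm (yh 0) (yf s) + ysc 2 * yf s | s. True}
   \<union> {comm (yh (Suc r)) (ye s) - comm (yh r) (ye (Suc s)) - (yh r * ye s + ye s * yh r) | r s. True}
   \<union> {comm (yh (Suc r)) (yf s) - comm (yh r) (yf (Suc s)) + (yh r * yf s + yf s * yh r) | r s. True}
   \<union> {comm (ye (Suc r)) (ye s) - comm (ye r) (ye (Suc s)) - (ye r * ye s + ye s * ye r) | r s. True}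
   \<union> {comm (yf (Suc r)) (yf s) - comm (yf r) (yf (Suc s)) + (yf r * yf s + yf s * yf r) | r s. True}"

text \<open>Preimage in the free algebra of the left ideal of Y(sl_2) generated by
  e^(r) and h^(r) - mu^(r): it is the sum of the two-sided ideal of the defining
  relations and the left ideal of the free algebra generated by these elements.
  Thus the Verma module M(mu(u)) is the free algebra modulo this subspace, and
  1_mu is the class of 1.\<close>
inductive_set verma_ideal :: "(nat \<Rightarrow> complex) \<Rightarrow> yfree set" for mu :: "nat \<Rightarrow> complex" where
  rel: "x \<in> yang_rels \<Longrightarrow> a * x * b \<in> verma_ideal mu"
| e: "a * ye r \<in> verma_ideal mu"
| h: "a * (yh r - ysc (mu r)) \<in> verma_ideal mu"
| zero: "0 \<in> verma_ideal mu"
| add: "x \<in> verma_ideal mu \<Longrightarrow> y \<in> verma_ideal mu \<Longrightarrow> x + y \<in> verma_ideal mu"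

text \<open>The series mu(u) = 1 + sum_r mu^(r) u^(-r-1), as a formal power series in u^(-1).\<close>
definition mu_series :: "(nat \<Rightarrow> complex) \<Rightarrow> complex fps" where
  "mu_series mu = Abs_fps (\<lambda>k. if k = 0 then 1 else mu (k - 1))"

end

theory Submission imports Defs begin

lemma vi_left: "x \<in> verma_ideal mu \<Longrightarrow> y * x \<in> verma_ideal mu"
proof (induction rule: verma_ideal.induct)
  case (rel x a b) then show ?case using verma_ideal.rel[of x "y*a" b] by (simp add: mult.assoc)
next
  case (e a r) then show ?case using verma_ideal.e[of "y*a" r] by (simp add: mult.assoc)
next
  case (h a r) then show ?case using verma_ideal.h[of "y*a" r] by (simp add: mult.assoc)
next
  case zero then show ?case by (simp add: verma_ideal.zero)
next
  case (add x1 x2) then show ?case by (simp add: distrib_left verma_ideal.add)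
qed

lemma vi_sum: "(\<And>i. i \<in> A \<Longrightarrow> g i \<in> verma_ideal mu) \<Longrightarrow> sum g A \<in> verma_ideal mu"
  by (induction A rule: infinite_finite_induct) (auto intro: verma_ideal.zero verma_ideal.add)

lemma ysc_mult: "ysc a * ysc b = ysc (a * b)"
  by (simp add: ysc_def mult_single)

lemma ysc_add: "ysc a + ysc b = ysc (a + b)"
  by (simp add: ysc_def single_add)

lemma ysc_sum: "(\<Sum>i\<in>A. ysc (g i)) = ysc (\<Sum>i\<in>A. g i)"
  by (induction A rule: infinite_finite_induct) (auto simp: ysc_def single_add)

lemma ye_ysc: "ye r * ysc c = ysc c * ye r"
  by (simp add: ysc_def ye_def mult_single)

lemma key: "ye r * yf i - ysc (mu (r + i)) \<in> verma_ideal mu"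
proof -
  have "ye r * yf i - ysc (mu (r + i)) =
    1 * (comm (ye r) (yf i) - yh (r + i)) * 1 + 1 * (yh (r+i) - ysc (mu (r+i))) + yf i * ye r"
    by (simp add: comm_def)
  moreover have "comm (ye r) (yf i) - yh (r + i) \<in> yang_rels" unfolding yang_rels_def by blast
  ultimately show ?thesis
    by (metis verma_ideal.add verma_ideal.e verma_ideal.h verma_ideal.rel)
qed

lemma alg:
  assumes "(\<Sum>i<s. c i * mu (r + i)) + mu (r + s) = 0"
  shows "ye r * ((\<Sum>i<s. ysc (c i) * yf i) + yf s) \<in> verma_ideal mu"
proof -
  define X where "X i = ye r * yf i - ysc (mu (r + i))" for i
  have XI: "X i \<in> verma_ideal mu" for i unfolding X_def by (rule key)
  have 1: "ye r * (ysc (c i) * yf i) = ysc (c i) * X i + ysc (c i * mu (r + i))" for i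
  proof -
    have "ye r * (ysc (c i) * yf i) = ysc (c i) * (ye r * yf i)"
      by (metis mult.assoc ye_ysc)
    also have "ye r * yf i = X i + ysc (mu (r + i))" by (simp add: X_def)
    finally show ?thesis by (simp only: distrib_left ysc_mult)
  qed
  have 2: "ye r * yf s = X s + ysc (mu (r + s))" by (simp add: X_def)
  have "ye r * ((\<Sum>i<s. ysc (c i) * yf i) + yf s) =
     (\<Sum>i<s. ye r * (ysc (c i) * yf i)) + ye r * yf s"
    by (simp only: distrib_left sum_distrib_left)
  also have "\<dots> = (\<Sum>i<s. ysc (c i) * X i) + (\<Sum>i<s. ysc (c i * mu (r + i))) + (X s + ysc (mu (r + s)))"
    by (simp only: 1 2 sum.distrib)
  also have "\<dots> = ((\<Sum>i<s. ysc (c i) * X i) + X s) + ysc ((\<Sum>i<s. c i * mu (r + i)) + mu (r + s))"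
    by (simp only: ysc_sum ysc_add[symmetric] add.assoc add.left_commute)
  also have "\<dots> = (\<Sum>i<s. ysc (c i) * X i) + X s"
    using assms by (simp add: ysc_def)
  finally show ?thesis
    by (simp add: vi_sum vi_left XI verma_ideal.add)
qed

lemma recur:
  assumes lQ: "lead_coeff Q = 1" and dP: "degree P = p" and dQ: "degree Q = p"
    and eq: "fps_of_poly (reflect_poly Q) * mu_series mu = fps_of_poly (reflect_poly P)"
  shows "(\<Sum>i\<le>p. coeff Q i * mu (r + i)) = 0"
proof -
  define n where "n = r + p + 1"
  have "fps_nth (fps_of_poly (reflect_poly Q) * mu_series mu) n = 0"
    unfolding eq using degree_reflect_poly_le[of P] dP by (simp add: n_def coeff_eq_0)
  hence "(\<Sum>j=0..n. coeff (reflect_poly Q) j * fps_nth (mu_series mu) (n - j)) = 0"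
    by (simp add: fps_mult_nth)
  moreover have "(\<Sum>j=0..n. coeff (reflect_poly Q) j * fps_nth (mu_series mu) (n - j))
      = (\<Sum>j=0..p. coeff (reflect_poly Q) j * fps_nth (mu_series mu) (n - j))"
    by (rule sum.mono_neutral_right) (auto simp: n_def coeff_reflect_poly dQ)
  moreover have "\<dots> = (\<Sum>j=0..p. coeff Q (p - j) * mu (r + (p - j)))"
    by (rule sum.cong) (auto simp: n_def coeff_reflect_poly dQ mu_series_def)
  moreover have "\<dots> = (\<Sum>i=0..p. coeff Q i * mu (r + i))"
    by (subst sum.atLeastAtMost_rev) simp
  ultimately show ?thesis by (simp add: atLeast0AtMost)
qed

lemma recur2:
  fixes mu q :: "nat \<Rightarrow> complex" and p s r :: nat
  assumes "\<And>r. (\<Sum>i\<le>p. q i * mu (r + i)) = (0::complex)" and "q p = 1" and "p \<le> s"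
  shows "(\<Sum>i<s. (if s - p \<le> i then q (i - (s - p)) else 0) * mu (r + i)) + mu (r + s) = 0"
proof -
  define d where "d = s - p"
  have s: "s = d + p" using assms(3) unfolding d_def by simp
  have "(\<Sum>i<s. (if d \<le> i then q (i - d) else 0) * mu (r + i))
      = (\<Sum>i\<in>{d..<d+p}. q (i - d) * mu (r + i))"
    by (rule sum.mono_neutral_cong_right) (auto simp: s)
  also have "\<dots> = (\<Sum>k<p. q k * mu (r + d + k))"
    using sum.shift_bounds_nat_ivl[of "\<lambda>i. q (i - d) * mu (r + i)" 0 d p]
    by (simp add: lessThan_atLeast0 add.commute add.left_commute)
  finally have "(\<Sum>i<s. (if d \<le> i then q (i - d) else 0) * mu (r + i)) + mu (r + s)
      = (\<Sum>k\<le>p. q k * mu (r + d + k))"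
    using assms(2) by (simp add: lessThan_Suc_atMost[symmetric] s add.assoc)
  also have "\<dots> = 0" using assms(1) .
  finally show ?thesis by (simp only: d_def)
qed

theorem corollary3p7:
  fixes mu :: "nat \<Rightarrow> complex" and P Q :: "complex poly" and p s :: nat
  assumes "lead_coeff P = 1" and "lead_coeff Q = 1"
    and "degree P = p" and "degree Q = p"
    and "fps_of_poly (reflect_poly Q) * mu_series mu = fps_of_poly (reflect_poly P)"
    and "s \<ge> p"
  shows "\<exists>c :: nat \<Rightarrow> complex. \<forall>r.
           ye r * ((\<Sum>i<s. ysc (c i) * yf i) + yf s) \<in> verma_ideal mu"
proof (intro exI allI)
  fix r
  have R: "\<And>r. (\<Sum>i\<le>p. coeff Q i * mu (r + i)) = 0"
    using recur[OF assms(2) assms(3) assms(4) assms(5)] .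
  have "coeff Q p = 1" using assms(2,4) by simp
  from recur2[OF R this assms(6)]
  show "ye r * ((\<Sum>i<s. ysc ((\<lambda>i. if s - p \<le> i then coeff Q (i - (s - p)) else 0) i) * yf i) + yf s)
        \<in> verma_ideal mu"
    by (intro alg) simp
qed

end
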